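(* Let $\mathfrak S$ be a commutative semiring. The set of all proper ideals, the set of all prime ideals, and the set of all strongly irreducible ideals of $\mathfrak S$, each endowed with the ideal topology, are sober spaces.
   Context: A semiring $(\mathfrak S,+,0,\cdot,1)$ has $(\mathfrak S,+,0)$ a commutative monoid, $(\mathfrak S,\cdot,1)$ a monoid, $0r=r0=0$, and two-sided distributivity; all semirings are commutative. An ideal is a nonempty proper subset closed under addition and under multiplication by elements of $\mathfrak S$. Prime: $ab\in\mathfrak p\Rightarrow a\in\mathfrak p$ or $b\in\mathfrak p$. Strongly irreducible: for ideals $\mathfrak a,\mathfrak b$, $\mathfrak a\cap\mathfrak b\subseteq\mathfrak s$ implies $\mathfrak a\subseteq\mathfrak s$ or $\mathfrak b\subseteq\mathfrak s$. For a set $\sigma_{\mathfrak S}$ of ideals and an ideal $\mathfrak a$, $\mathfrak a^{\uparrow}=\{\mathfrak x\in\sigma_{\mathfrak S}\mid\mathfrak a\subseteq\mathfrak x\}$; the ideal topology has these sets as a subbasis of closed sets. Sober: every non-empty irreducible closed subset is the closure of a unique point. *)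

theory Defs
  imports "HOL-Analysis.Analysis"
begin

text \<open>Semirings: commutative semiring with 0 and 1 (0 = 1 allowed):
  sort {comm_semiring_0, comm_monoid_mult}.\<close>

definition is_ideal :: "'a::{comm_semiring_0,comm_monoid_mult} set \<Rightarrow> bool" where
  "is_ideal I \<longleftrightarrow> I \<noteq> {} \<and> I \<noteq> UNIV \<and>
     (\<forall>x\<in>I. \<forall>y\<in>I. x + y \<in> I) \<and> (\<forall>r x. x \<in> I \<longrightarrow> r * x \<in> I)"

definition is_prime_ideal :: "'a::{comm_semiring_0,comm_monoid_mult} set \<Rightarrow> bool" where
  "is_prime_ideal P \<longleftrightarrow> is_ideal P \<and> (\<forall>a b. a * b \<in> P \<longrightarrow> a \<in> P \<or> b \<in> P)"

definition is_strongly_irreducible_ideal :: "'a::{comm_semiring_0,comm_monoid_mult} set \<Rightarrow> bool" where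
  "is_strongly_irreducible_ideal S \<longleftrightarrow> is_ideal S \<and>
     (\<forall>A B. is_ideal A \<longrightarrow> is_ideal B \<longrightarrow> A \<inter> B \<subseteq> S \<longrightarrow> A \<subseteq> S \<or> B \<subseteq> S)"

definition up_set :: "'a set set \<Rightarrow> 'a set \<Rightarrow> 'a set set" where
  "up_set \<sigma> A = {X \<in> \<sigma>. A \<subseteq> X}"

text \<open>Ideal topology on sigma: the sets up_set sigma a (a an ideal) form a subbasis of
  closed sets, i.e. their complements in sigma form a subbasis of open sets.\<close>
definition ideal_topology :: "'a::{comm_semiring_0,comm_monoid_mult} set set \<Rightarrow> 'a set topology" where
  "ideal_topology \<sigma> =
     subtopology (topology_generated_by {\<sigma> - up_set \<sigma> A | A. is_ideal A}) \<sigma>"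

definition irreducible_in :: "'b topology \<Rightarrow> 'b set \<Rightarrow> bool" where
  "irreducible_in X C \<longleftrightarrow> C \<noteq> {} \<and> C \<subseteq> topspace X \<and>
     (\<forall>A B. closedin X A \<longrightarrow> closedin X B \<longrightarrow> C \<subseteq> A \<union> B \<longrightarrow> C \<subseteq> A \<or> C \<subseteq> B)"

definition sober_space :: "'b topology \<Rightarrow> bool" where
  "sober_space X \<longleftrightarrow>
     (\<forall>C. closedin X C \<and> irreducible_in X C \<longrightarrow>
        (\<exists>!x. x \<in> topspace X \<and> C = X closure_of {x}))"

end

theory Submission
  imports Defs
begin

lemma gen_nbhd:
  assumes "generate_topology_on SB U"
  shows "Y \<in> U \<Longrightarrow> \<exists>F. finite F \<and> F \<noteq> {} \<and> F \<subseteq> SB \<and> Y \<in> \<Inter>F \<and> \<Inter>F \<subseteq> U"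
  using assms
proof (induction arbitrary: Y)
  case Empty
  then show ?case by simp
next
  case (Int a b)
  have "Y \<in> a" "Y \<in> b" using Int.prems by auto
  obtain F1 where F1: "finite F1" "F1 \<noteq> {}" "F1 \<subseteq> SB" "Y \<in> \<Inter>F1" "\<Inter>F1 \<subseteq> a"
    using Int.IH(1)[OF \<open>Y \<in> a\<close>] by blast
  obtain F2 where F2: "finite F2" "F2 \<noteq> {}" "F2 \<subseteq> SB" "Y \<in> \<Inter>F2" "\<Inter>F2 \<subseteq> b"
    using Int.IH(2)[OF \<open>Y \<in> b\<close>] by blast
  have "\<Inter>(F1 \<union> F2) \<subseteq> a \<inter> b" using F1(5) F2(5) by auto
  moreover have "Y \<in> \<Inter>(F1 \<union> F2)" using F1(4) F2(4) by blast
  ultimately show ?case using F1(1-3) F2(1-3) by (intro exI[of _ "F1 \<union> F2"]) simp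
next
  case (UN K)
  then obtain k where k: "k \<in> K" "Y \<in> k" by blast
  obtain F where F: "finite F" "F \<noteq> {}" "F \<subseteq> SB" "Y \<in> \<Inter>F" "\<Inter>F \<subseteq> k"
    using UN.IH[OF k] by blast
  have "\<Inter>F \<subseteq> \<Union>K" using F(5) k(1) by blast
  then show ?case using F(1-4) by (intro exI[of _ F]) simp
next
  case (Basis s)
  then show ?case by (intro exI[of _ "{s}"]) simp
qed

lemma irred_finite:
  assumes "irreducible_in X C" "finite F" "F \<noteq> {}" "\<forall>K\<in>F. closedin X K" "C \<subseteq> \<Union>F"
  shows "\<exists>K\<in>F. C \<subseteq> K"
  using assms(2,3,4,5)
proof (induction F rule: finite_ne_induct)
  case (singleton x)
  then show ?case by simp
next
  case (insert x F)
  have c1: "closedin X (\<Union>F)" using insert.prems insert.hyps by (intro closedin_Union) simp_all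
  have c2: "closedin X x" using insert.prems by simp
  have "C \<subseteq> x \<union> \<Union>F" using insert.prems by simp
  then have "C \<subseteq> x \<or> C \<subseteq> \<Union>F"
    using assms(1) c1 c2 unfolding irreducible_in_def by (elim conjE) (erule allE[of _ x], erule allE[of _ "\<Union>F"], simp)
  then show ?case
  proof
    assume "C \<subseteq> x" then show ?case by simp
  next
    assume "C \<subseteq> \<Union>F"
    then obtain K where "K \<in> F" "C \<subseteq> K" using insert.IH insert.prems by auto
    then show ?case by blast
  qed
qed

lemma ideal_zero: "is_ideal (I::'a::{comm_semiring_0,comm_monoid_mult} set) \<Longrightarrow> 0 \<in> I"
proof -
  assume a: "is_ideal I"
  then obtain p where "p \<in> I" unfolding is_ideal_def by auto
  then have "0 * p \<in> I" using a unfolding is_ideal_def by blast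
  then show ?thesis by simp
qed

lemma ideal_Inter:
  fixes C :: "'a::{comm_semiring_0,comm_monoid_mult} set set"
  assumes "C \<noteq> {}" "\<forall>P\<in>C. is_ideal P"
  shows "is_ideal (\<Inter>C)"
proof -
  have z: "0 \<in> \<Inter>C" using assms(2) ideal_zero by blast
  obtain P where P: "P \<in> C" using assms by blast
  then have "P \<noteq> UNIV" using assms(2) unfolding is_ideal_def by simp
  then have "\<Inter>C \<noteq> UNIV" using P by auto
  moreover have "\<forall>x\<in>\<Inter>C. \<forall>y\<in>\<Inter>C. x + y \<in> \<Inter>C"
    using assms(2) unfolding is_ideal_def by simp
  moreover have "\<forall>r x. x \<in> \<Inter>C \<longrightarrow> r * x \<in> \<Inter>C"
    using assms(2) unfolding is_ideal_def by simp
  ultimately show ?thesis using z unfolding is_ideal_def by auto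
qed

lemma sober_general:
  fixes \<sigma> :: "'a::{comm_semiring_0,comm_monoid_mult} set set"
  assumes ideals: "\<forall>X\<in>\<sigma>. is_ideal X"
    and hyp: "\<And>C. C \<noteq> {} \<Longrightarrow> C \<subseteq> \<sigma> \<Longrightarrow>
       (\<And>A B. is_ideal A \<Longrightarrow> is_ideal B \<Longrightarrow> C \<subseteq> up_set \<sigma> A \<union> up_set \<sigma> B \<Longrightarrow>
           C \<subseteq> up_set \<sigma> A \<or> C \<subseteq> up_set \<sigma> B) \<Longrightarrow> \<Inter>C \<in> \<sigma>"
  shows "sober_space (ideal_topology \<sigma>)"
proof -
  define SB where "SB = {\<sigma> - up_set \<sigma> A | A. is_ideal A}"
  define T where "T = \<Union>SB"
  define \<tau> where "\<tau> = topology_generated_by SB"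
  have topT: "topspace \<tau> = T" unfolding \<tau>_def T_def by simp
  have Tsub: "T \<subseteq> \<sigma>" unfolding T_def SB_def by auto
  have eq: "ideal_topology \<sigma> = \<tau>"
    unfolding ideal_topology_def \<tau>_def SB_def[symmetric]
    by (rule subtopology_superset) (use Tsub topT \<tau>_def in simp)
  have inT: "X \<in> T \<longleftrightarrow> X \<in> \<sigma> \<and> (\<exists>A. is_ideal A \<and> \<not> A \<subseteq> X)" for X
    unfolding T_def SB_def up_set_def by auto
  have closed_up: "closedin \<tau> (T \<inter> up_set \<sigma> A)" if "is_ideal A" for A
  proof -
    have "T - (T \<inter> up_set \<sigma> A) = \<sigma> - up_set \<sigma> A"
      using that inT unfolding up_set_def by auto
    moreover have "\<sigma> - up_set \<sigma> A \<in> SB" using that SB_def by auto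
    ultimately show ?thesis unfolding closedin_def topT
      using topology_generated_by_Basis[of _ SB] \<tau>_def by auto
  qed
  have nbhd: "\<exists>F. finite F \<and> F \<noteq> {} \<and> F \<subseteq> SB \<and> Y \<in> \<Inter>F \<and> \<Inter>F \<subseteq> U"
    if "openin \<tau> U" "Y \<in> U" for U Y
    using gen_nbhd that openin_topology_generated_by unfolding \<tau>_def by metis
  have clos: "\<tau> closure_of {x} = T \<inter> up_set \<sigma> x" if "x \<in> T" for x
  proof
    have "is_ideal x" using that Tsub ideals by auto
    then show "\<tau> closure_of {x} \<subseteq> T \<inter> up_set \<sigma> x"
      using that Tsub closed_up by (intro closure_of_minimal) (auto simp: up_set_def)
  next
    show "T \<inter> up_set \<sigma> x \<subseteq> \<tau> closure_of {x}"
    proof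
      fix Y assume Y: "Y \<in> T \<inter> up_set \<sigma> x"
      show "Y \<in> \<tau> closure_of {x}"
      proof (rule ccontr)
        assume nY: "Y \<notin> \<tau> closure_of {x}"
        have "openin \<tau> (T - \<tau> closure_of {x})"
          using closedin_closure_of[of \<tau> "{x}"] unfolding closedin_def topT by blast
        then obtain F where F: "finite F" "F \<noteq> {}" "F \<subseteq> SB" "Y \<in> \<Inter>F"
          "\<Inter>F \<subseteq> T - \<tau> closure_of {x}"
          using nbhd[of "T - \<tau> closure_of {x}" Y] Y nY by auto
        have "x \<in> \<Inter>F"
        proof
          fix U assume "U \<in> F"
          then obtain A where "U = \<sigma> - up_set \<sigma> A" "is_ideal A" using F SB_def by auto
          moreover have "Y \<in> U" using F(4) \<open>U \<in> F\<close> by blast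
          ultimately show "x \<in> U" using Y that Tsub unfolding up_set_def by auto
        qed
        moreover have "x \<in> \<tau> closure_of {x}"
          using closure_of_subset[of "{x}" \<tau>] that topT by auto
        ultimately show False using F by auto
      qed
    qed
  qed
  show ?thesis
    unfolding sober_space_def eq
  proof (intro allI impI)
    fix C assume C: "closedin \<tau> C \<and> irreducible_in \<tau> C"
    have CT: "C \<subseteq> T" and Cne: "C \<noteq> {}" using C unfolding irreducible_in_def topT by auto
    define x where "x = \<Inter>C"
    have irr2: "C \<subseteq> up_set \<sigma> A \<or> C \<subseteq> up_set \<sigma> B"
      if "is_ideal A" "is_ideal B" "C \<subseteq> up_set \<sigma> A \<union> up_set \<sigma> B" for A B
    proof -
      have "C \<subseteq> (T \<inter> up_set \<sigma> A) \<union> (T \<inter> up_set \<sigma> B)" using that CT by auto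
      then have "C \<subseteq> T \<inter> up_set \<sigma> A \<or> C \<subseteq> T \<inter> up_set \<sigma> B"
        using C closed_up that unfolding irreducible_in_def by blast
      then show ?thesis by auto
    qed
    have xs: "x \<in> \<sigma>" unfolding x_def using hyp[OF Cne] CT Tsub irr2 by blast
    obtain P where "P \<in> C" using Cne by auto
    then obtain A where "is_ideal A" "\<not> A \<subseteq> P" using CT inT by blast
    then have "\<not> A \<subseteq> x" using \<open>P \<in> C\<close> x_def by auto
    then have xT: "x \<in> T" using inT xs \<open>is_ideal A\<close> by blast
    have Ceq: "C = T \<inter> up_set \<sigma> x"
    proof
      show "C \<subseteq> T \<inter> up_set \<sigma> x" using CT Tsub x_def unfolding up_set_def by auto
    next
      show "T \<inter> up_set \<sigma> x \<subseteq> C"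
      proof
        fix Y assume Y: "Y \<in> T \<inter> up_set \<sigma> x"
        show "Y \<in> C"
        proof (rule ccontr)
          assume nY: "Y \<notin> C"
          have "openin \<tau> (T - C)" using C unfolding closedin_def topT by blast
          then obtain F where F: "finite F" "F \<noteq> {}" "F \<subseteq> SB" "Y \<in> \<Inter>F" "\<Inter>F \<subseteq> T - C"
            using nbhd[of "T - C" Y] Y nY by auto
          have cl: "\<forall>K\<in>(\<lambda>U. T - U) ` F. closedin \<tau> K"
          proof
            fix K assume "K \<in> (\<lambda>U. T - U) ` F"
            then obtain U where "U \<in> F" "K = T - U" by auto
            then have "openin \<tau> U" using F \<tau>_def topology_generated_by_Basis by blast
            then show "closedin \<tau> K" using \<open>K = T - U\<close> topT by auto
          qed
          have "C \<subseteq> \<Union>((\<lambda>U. T - U) ` F)" using F CT by auto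
          then obtain U where U: "U \<in> F" "C \<subseteq> T - U"
            using irred_finite[of \<tau> C "(\<lambda>U. T - U) ` F"] C F cl by auto
          then obtain A where A: "U = \<sigma> - up_set \<sigma> A" "is_ideal A" using F SB_def by auto
          have "A \<subseteq> x" using U A CT Tsub unfolding x_def up_set_def by auto
          moreover have "\<not> A \<subseteq> Y" using F U A unfolding up_set_def by auto
          ultimately show False using Y unfolding up_set_def by auto
        qed
      qed
    qed
    show "\<exists>!x. x \<in> topspace \<tau> \<and> C = \<tau> closure_of {x}"
    proof
      show "x \<in> topspace \<tau> \<and> C = \<tau> closure_of {x}" using xT Ceq clos topT by auto
    next
      fix y assume y: "y \<in> topspace \<tau> \<and> C = \<tau> closure_of {y}"
      then have Cy: "C = T \<inter> up_set \<sigma> y" using clos topT by auto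
      have "x \<in> C" using Ceq xT xs unfolding up_set_def by auto
      then have 1: "y \<subseteq> x" using Cy unfolding up_set_def by auto
      have "y \<in> C" using Cy y topT Tsub unfolding up_set_def by auto
      then have 2: "x \<subseteq> y" using Ceq unfolding up_set_def by auto
      show "y = x" using 1 2 by auto
    qed
  qed
qed

lemma gen_ideal:
  fixes x :: "'a::{comm_semiring_0,comm_monoid_mult} set"
  assumes "is_ideal x" "{p + r * a | p r. p \<in> x} \<noteq> UNIV"
  shows "is_ideal {p + r * a | p r. p \<in> x}"
proof -
  let ?J = "{p + r * a | p r. p \<in> x}"
  have "0 + 0 * a \<in> ?J" using ideal_zero[OF assms(1)] by blast
  moreover have "u + v \<in> ?J" if uv: "u \<in> ?J" "v \<in> ?J" for u v
  proof -
    obtain p r where "u = p + r * a" "p \<in> x" using uv(1) unfolding mem_Collect_eq by blast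
    obtain q s where "v = q + s * a" "q \<in> x" using uv(2) unfolding mem_Collect_eq by blast
    have "u + v = (p + q) + (r + s) * a" using \<open>u = p + r * a\<close> \<open>v = q + s * a\<close>
      by (simp add: algebra_simps)
    moreover have "p + q \<in> x" using assms(1) \<open>p \<in> x\<close> \<open>q \<in> x\<close> unfolding is_ideal_def by blast
    ultimately show ?thesis by blast
  qed
  moreover have "t * u \<in> ?J" if uJ: "u \<in> ?J" for t u
  proof -
    obtain p r where "u = p + r * a" "p \<in> x" using uJ unfolding mem_Collect_eq by blast
    have "t * u = t * p + (t * r) * a" using \<open>u = p + r * a\<close>
      by (simp add: algebra_simps)
    moreover have "t * p \<in> x" using assms(1) \<open>p \<in> x\<close> unfolding is_ideal_def by blast
    ultimately show ?thesis by blast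
  qed
  ultimately show ?thesis using assms(2) unfolding is_ideal_def by blast
qed

theorem corollary3p10:
  fixes S :: "'a::{comm_semiring_0,comm_monoid_mult} itself"
  shows "sober_space (ideal_topology {I :: 'a set. is_ideal I})
       \<and> sober_space (ideal_topology {I :: 'a set. is_prime_ideal I})
       \<and> sober_space (ideal_topology {I :: 'a set. is_strongly_irreducible_ideal I})"
proof (intro conjI)
  show "sober_space (ideal_topology {I :: 'a set. is_ideal I})"
    by (rule sober_general) (auto intro: ideal_Inter)
next
  show "sober_space (ideal_topology {I :: 'a set. is_strongly_irreducible_ideal I})"
  proof (rule sober_general)
    show "\<forall>X\<in>{I :: 'a set. is_strongly_irreducible_ideal I}. is_ideal X"
      unfolding is_strongly_irreducible_ideal_def by auto
  next
    fix C :: "'a set set"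
    assume Cne: "C \<noteq> {}" and Cs: "C \<subseteq> {I. is_strongly_irreducible_ideal I}"
      and irr: "\<And>A B. is_ideal A \<Longrightarrow> is_ideal B \<Longrightarrow>
        C \<subseteq> up_set {I. is_strongly_irreducible_ideal I} A \<union> up_set {I. is_strongly_irreducible_ideal I} B \<Longrightarrow>
        C \<subseteq> up_set {I. is_strongly_irreducible_ideal I} A \<or> C \<subseteq> up_set {I. is_strongly_irreducible_ideal I} B"
    have xi: "is_ideal (\<Inter>C)" using Cne Cs ideal_Inter unfolding is_strongly_irreducible_ideal_def by blast
    have "A \<subseteq> \<Inter>C \<or> B \<subseteq> \<Inter>C" if "is_ideal A" "is_ideal B" "A \<inter> B \<subseteq> \<Inter>C" for A B
    proof -
      have "C \<subseteq> up_set {I. is_strongly_irreducible_ideal I} A \<union> up_set {I. is_strongly_irreducible_ideal I} B"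
        using Cs that unfolding up_set_def is_strongly_irreducible_ideal_def by blast
      then show ?thesis using irr[OF that(1,2)] unfolding up_set_def by blast
    qed
    then show "\<Inter>C \<in> {I. is_strongly_irreducible_ideal I}"
      using xi unfolding is_strongly_irreducible_ideal_def by blast
  qed
next
  show "sober_space (ideal_topology {I :: 'a set. is_prime_ideal I})"
  proof (rule sober_general)
    show "\<forall>X\<in>{I :: 'a set. is_prime_ideal I}. is_ideal X"
      unfolding is_prime_ideal_def by auto
  next
    fix C :: "'a set set"
    assume Cne: "C \<noteq> {}" and Cs: "C \<subseteq> {I. is_prime_ideal I}"
      and irr: "\<And>A B. is_ideal A \<Longrightarrow> is_ideal B \<Longrightarrow>
        C \<subseteq> up_set {I. is_prime_ideal I} A \<union> up_set {I. is_prime_ideal I} B \<Longrightarrow>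
        C \<subseteq> up_set {I. is_prime_ideal I} A \<or> C \<subseteq> up_set {I. is_prime_ideal I} B"
    define x where "x = \<Inter>C"
    have xi: "is_ideal x" using Cne Cs ideal_Inter unfolding is_prime_ideal_def x_def by blast
    have "a \<in> x \<or> b \<in> x" if ab: "a * b \<in> x" for a b
    proof -
      define Ja where "Ja = {p + r * a | p r. p \<in> x}"
      define Jb where "Jb = {p + r * b | p r. p \<in> x}"
      have aJ: "a \<in> Ja" unfolding Ja_def using ideal_zero[OF xi] by (intro CollectI exI[of _ 0] exI[of _ 1]) simp
      have bJ: "b \<in> Jb" unfolding Jb_def using ideal_zero[OF xi] by (intro CollectI exI[of _ 0] exI[of _ 1]) simp
      have Jsub: "Ja \<subseteq> P" if "P \<in> C" "a \<in> P" for P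
      proof -
        have "is_ideal P" using that Cs unfolding is_prime_ideal_def by auto
        moreover have "x \<subseteq> P" using that x_def by auto
        ultimately show ?thesis using that(2) unfolding Ja_def is_ideal_def by blast
      qed
      have Jsubb: "Jb \<subseteq> P" if "P \<in> C" "b \<in> P" for P
      proof -
        have "is_ideal P" using that Cs unfolding is_prime_ideal_def by auto
        moreover have "x \<subseteq> P" using that x_def by auto
        ultimately show ?thesis using that(2) unfolding Jb_def is_ideal_def by blast
      qed
      have prim: "a \<in> P \<or> b \<in> P" if "P \<in> C" for P
        using that Cs ab x_def unfolding is_prime_ideal_def by blast
      have propr: "P \<noteq> UNIV" if "P \<in> C" for P
        using that Cs unfolding is_prime_ideal_def is_ideal_def by blast
      show ?thesis
      proof (cases "Ja = UNIV")
        case True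
        then have "\<forall>P\<in>C. b \<in> P" using Jsub prim propr by blast
        then have "b \<in> x" using x_def by auto
        then show ?thesis by blast
      next
        case Fa: False
        show ?thesis
        proof (cases "Jb = UNIV")
          case True
          then have "\<forall>P\<in>C. a \<in> P" using Jsubb prim propr by blast
          then have "a \<in> x" using x_def by auto
          then show ?thesis by blast
        next
          case False
          have ia: "is_ideal Ja" using gen_ideal[OF xi] Fa Ja_def by blast
          have ib: "is_ideal Jb" using gen_ideal[OF xi] False Jb_def by blast
          have "C \<subseteq> up_set {I. is_prime_ideal I} Ja \<union> up_set {I. is_prime_ideal I} Jb"
            using Cs prim Jsub Jsubb unfolding up_set_def by blast
          then have "C \<subseteq> up_set {I. is_prime_ideal I} Ja \<or> C \<subseteq> up_set {I. is_prime_ideal I} Jb"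
            using irr[OF ia ib] by blast
          then show ?thesis using aJ bJ unfolding up_set_def x_def by blast
        qed
      qed
    qed
    then show "\<Inter>C \<in> {I. is_prime_ideal I}"
      using xi unfolding is_prime_ideal_def x_def by blast
  qed
qed

end
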